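(* Let $D$ be an essential domain admitting an essential representation $\mathcal V$ such that the set $\{\mathfrak m_V\cap D: V\in\mathcal V\}$ of centers in $D$ of the valuation domains in $\mathcal V$ (where $\mathfrak m_V$ is the maximal ideal of $V$) is closed in $\operatorname{Spec}(D)$ with respect to the constructible topology. Then $D$ is a PvMD.
   Context: All rings are commutative with identity. For an integral domain $D$ with quotient field $K$ and a nonzero fractional ideal $I$, set $(D:I)=\{x\in K: xI\subseteq D\}$, $I^v=(D:(D:I))$, $I^t=\bigcup\{J^v: J\subseteq I \text{ finitely generated}\}$; $I$ is a $t$-ideal if $I=(0)$ or $I=I^t$; a $t$-maximal ideal is a $t$-ideal maximal among proper $t$-ideals. $D$ is a PvMD if $D_{\mathfrak m}$ is a valuation domain for every $t$-maximal ideal $\mathfrak m$. A valuation overring of $D$ is essential if it equals $D_{\mathfrak p}$ for some prime $\mathfrak p$; an essential representation of $D$ is a family of essential valuation overrings of $D$ with intersection $D$; $D$ is essential if it has one. The constructible topology on $\operatorname{Spec}(A)$ is the coarsest topology in which every $D(f)=\{\mathfrak p:f\notin\mathfrak p\}$ is clopen. *)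

theory Defs
  imports "HOL-Analysis.Analysis"
begin

text \<open>An integral domain D is represented as a subring of a field 'a whose quotient field is
  the whole field 'a (so K = UNIV).\<close>

definition subring :: "'a::field set \<Rightarrow> bool" where
  "subring D \<longleftrightarrow> 0 \<in> D \<and> 1 \<in> D \<and> (\<forall>x\<in>D. \<forall>y\<in>D. x + y \<in> D \<and> x - y \<in> D \<and> x * y \<in> D)"

definition domain_with_qf :: "'a::field set \<Rightarrow> bool" where
  "domain_with_qf D \<longleftrightarrow> subring D \<and> (\<forall>x. \<exists>a\<in>D. \<exists>b\<in>D. b \<noteq> 0 \<and> x = a / b)"

definition ideal_of :: "'a::field set \<Rightarrow> 'a set \<Rightarrow> bool" where
  "ideal_of D I \<longleftrightarrow> I \<subseteq> D \<and> 0 \<in> I \<and> (\<forall>x\<in>I. \<forall>y\<in>I. x + y \<in> I) \<and> (\<forall>d\<in>D. \<forall>x\<in>I. d * x \<in> I)"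

definition prime_ideal_of :: "'a::field set \<Rightarrow> 'a set \<Rightarrow> bool" where
  "prime_ideal_of D P \<longleftrightarrow> ideal_of D P \<and> P \<noteq> D \<and>
     (\<forall>a\<in>D. \<forall>b\<in>D. a * b \<in> P \<longrightarrow> a \<in> P \<or> b \<in> P)"

definition Spec :: "'a::field set \<Rightarrow> 'a set set" where
  "Spec D = {P. prime_ideal_of D P}"

definition basic_open :: "'a::field set \<Rightarrow> 'a \<Rightarrow> 'a set set" where
  "basic_open D f = {P \<in> Spec D. f \<notin> P}"

definition constructible_topology :: "'a::field set \<Rightarrow> 'a set topology" where
  "constructible_topology D =
     topology_generated_by ({basic_open D f | f. f \<in> D} \<union> {Spec D - basic_open D f | f. f \<in> D})"

definition colon :: "'a::field set \<Rightarrow> 'a set \<Rightarrow> 'a set" where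
  "colon D I = {x. \<forall>y\<in>I. x * y \<in> D}"

definition vclos :: "'a::field set \<Rightarrow> 'a set \<Rightarrow> 'a set" where
  "vclos D I = colon D (colon D I)"

definition fg_ideal :: "'a::field set \<Rightarrow> 'a set \<Rightarrow> 'a set" where
  "fg_ideal D F = {(\<Sum>f\<in>F. c f * f) | c. \<forall>f\<in>F. c f \<in> D}"

definition tclos :: "'a::field set \<Rightarrow> 'a set \<Rightarrow> 'a set" where
  "tclos D I = \<Union>{vclos D (fg_ideal D F) | F. finite F \<and> fg_ideal D F \<subseteq> I}"

definition t_ideal :: "'a::field set \<Rightarrow> 'a set \<Rightarrow> bool" where
  "t_ideal D I \<longleftrightarrow> I = {0} \<or> I = tclos D I"

definition t_maximal :: "'a::field set \<Rightarrow> 'a set \<Rightarrow> bool" where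
  "t_maximal D M \<longleftrightarrow> ideal_of D M \<and> M \<noteq> D \<and> t_ideal D M \<and>
     (\<forall>J. ideal_of D J \<and> J \<noteq> D \<and> t_ideal D J \<and> M \<subseteq> J \<longrightarrow> J = M)"

definition localization :: "'a::field set \<Rightarrow> 'a set \<Rightarrow> 'a set" where
  "localization D P = {a / s | a s. a \<in> D \<and> s \<in> D \<and> s \<notin> P}"

definition valuation_domain :: "'a::field set \<Rightarrow> bool" where
  "valuation_domain V \<longleftrightarrow> subring V \<and> (\<forall>x. x \<noteq> 0 \<longrightarrow> x \<in> V \<or> inverse x \<in> V)"

definition PvMD :: "'a::field set \<Rightarrow> bool" where
  "PvMD D \<longleftrightarrow> (\<forall>M. t_maximal D M \<longrightarrow> valuation_domain (localization D M))"

definition essential_valuation_overring :: "'a::field set \<Rightarrow> 'a set \<Rightarrow> bool" where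
  "essential_valuation_overring D V \<longleftrightarrow> valuation_domain V \<and> D \<subseteq> V \<and>
     (\<exists>P \<in> Spec D. V = localization D P)"

definition essential_representation :: "'a::field set \<Rightarrow> 'a set set \<Rightarrow> bool" where
  "essential_representation D \<V> \<longleftrightarrow> (\<forall>V\<in>\<V>. essential_valuation_overring D V) \<and> \<Inter>\<V> = D"

definition essential_domain :: "'a::field set \<Rightarrow> bool" where
  "essential_domain D \<longleftrightarrow> (\<exists>\<V>. essential_representation D \<V>)"

definition max_ideal :: "'a::field set \<Rightarrow> 'a set" where
  "max_ideal V = {x \<in> V. x = 0 \<or> inverse x \<notin> V}"

definition center :: "'a::field set \<Rightarrow> 'a set \<Rightarrow> 'a set" where
  "center D V = max_ideal V \<inter> D"

end

theory Submission
  imports Defs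
begin


lemma subring_sum:
  assumes "subring D" "finite S" "\<forall>i\<in>S. g i \<in> D"
  shows "sum g S \<in> D"
  using assms(2,3) proof (induction S rule: finite_induct)
  case empty then show ?case using assms(1) by (simp add: subring_def)
next
  case (insert x F) then show ?case using assms(1) by (simp add: subring_def)
qed

lemma subring_prod:
  assumes "subring D" "finite S" "\<forall>i\<in>S. g i \<in> D"
  shows "prod g S \<in> D"
  using assms(2,3) proof (induction S rule: finite_induct)
  case empty then show ?case using assms(1) by (simp add: subring_def)
next
  case (insert x F) then show ?case using assms(1) by (simp add: subring_def)
qed

lemma ideal_sum:
  assumes "ideal_of D I" "finite S" "\<forall>i\<in>S. g i \<in> I"
  shows "sum g S \<in> I"
  using assms(2,3) proof (induction S rule: finite_induct)
  case empty then show ?case using assms(1) by (simp add: ideal_of_def)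
next
  case (insert x F) then show ?case using assms(1) by (simp add: ideal_of_def)
qed

lemma prime_one:
  assumes "prime_ideal_of D P" "subring D"
  shows "1 \<notin> P"
proof
  assume one: "1 \<in> P"
  have PD: "P \<subseteq> D" "P \<noteq> D" and Pm: "\<And>d x. d \<in> D \<Longrightarrow> x \<in> P \<Longrightarrow> d * x \<in> P"
    using assms(1) unfolding prime_ideal_of_def ideal_of_def by auto
  have "D \<subseteq> P"
  proof
    fix d assume "d \<in> D"
    then have "d * 1 \<in> P" using Pm[OF _ one] by blast
    then show "d \<in> P" by simp
  qed
  then show False using PD by auto
qed

lemma prime_prod:
  assumes "prime_ideal_of D P" "subring D" "finite S" "\<forall>i\<in>S. g i \<in> D \<and> g i \<notin> P"
  shows "prod g S \<in> D \<and> prod g S \<notin> P"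
  using assms(3,4) proof (induction S rule: finite_induct)
  case empty then show ?case using prime_one[OF assms(1,2)] assms(2) by (simp add: subring_def)
next
  case (insert x F)
  have IH: "prod g F \<in> D" "prod g F \<notin> P" using insert by auto
  have gx: "g x \<in> D" "g x \<notin> P" using insert by auto
  have "g x * prod g F \<in> D" using IH gx assms(2) by (simp add: subring_def)
  moreover have "g x * prod g F \<notin> P"
  proof
    assume "g x * prod g F \<in> P"
    then have "g x \<in> P \<or> prod g F \<in> P" using assms(1) IH gx unfolding prime_ideal_of_def by blast
    then show False using IH gx by simp
  qed
  ultimately show ?case using insert by simp
qed

lemma in_fg:
  assumes "subring D" "finite F" "f \<in> F"
  shows "f \<in> fg_ideal D F"
proof -
  define c where "c = (\<lambda>g. if g = f then 1 else (0::'a))"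
  have "(\<Sum>g\<in>F. c g * g) = (\<Sum>g\<in>F. if f = g then g else 0)"
    unfolding c_def by (rule sum.cong) auto
  also have "\<dots> = f" using assms(2,3) by simp
  finally have e: "f = (\<Sum>g\<in>F. c g * g)" by simp
  have cD: "\<forall>g\<in>F. c g \<in> D" using assms(1) unfolding c_def by (simp add: subring_def)
  show ?thesis unfolding fg_ideal_def using e cD by blast
qed

lemma colon_fg:
  assumes "subring D" "finite F" "\<forall>f\<in>F. z * f \<in> D"
  shows "z \<in> colon D (fg_ideal D F)"
  unfolding colon_def fg_ideal_def
proof (safe)
  fix c assume c: "\<forall>f\<in>F. c f \<in> D"
  have "z * (\<Sum>f\<in>F. c f * f) = (\<Sum>f\<in>F. c f * (z * f))"
    by (simp add: sum_distrib_left mult.left_commute)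
  also have "\<dots> \<in> D" using subring_sum[OF assms(1,2)] c assms(1,3) by (simp add: subring_def)
  finally show "z * (\<Sum>f\<in>F. c f * f) \<in> D" .
qed

lemma fg_sub:
  assumes "ideal_of D I" "finite F" "F \<subseteq> I"
  shows "fg_ideal D F \<subseteq> I"
  unfolding fg_ideal_def
proof safe
  fix c assume c: "\<forall>f\<in>F. c f \<in> D"
  have "\<forall>f\<in>F. c f * f \<in> I"
  proof
    fix f assume f: "f \<in> F"
    then have "f \<in> I" "c f \<in> D" using assms(3) c by auto
    then show "c f * f \<in> I" using assms(1) unfolding ideal_of_def by blast
  qed
  then show "(\<Sum>f\<in>F. c f * f) \<in> I" by (rule ideal_sum[OF assms(1,2)])
qed

lemma sub_vclos: "I \<subseteq> vclos D I"
proof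
  fix x assume x: "x \<in> I"
  show "x \<in> vclos D I" unfolding vclos_def colon_def
  proof (intro CollectI ballI)
    fix y assume "y \<in> {x. \<forall>y\<in>I. x * y \<in> D}"
    then have "y * x \<in> D" using x by blast
    then show "x * y \<in> D" by (simp add: mult.commute)
  qed
qed



definition fip :: "'b set \<Rightarrow> 'b set set \<Rightarrow> bool" where
  "fip X U \<longleftrightarrow> (\<forall>G. finite G \<and> G \<subseteq> U \<longrightarrow> X \<inter> \<Inter>G \<noteq> {})"

lemma fip_insert:
  assumes "fip X U" "\<forall>G. finite G \<and> G \<subseteq> U \<longrightarrow> X \<inter> A \<inter> \<Inter>G \<noteq> {}"
  shows "fip X (insert A U)"
  unfolding fip_def
proof (intro allI impI)
  fix G assume G: "finite G \<and> G \<subseteq> insert A U"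
  have "finite (G - {A}) \<and> G - {A} \<subseteq> U" using G by auto
  then have ne: "X \<inter> A \<inter> \<Inter>(G - {A}) \<noteq> {}" using assms(2) by simp
  have "X \<inter> A \<inter> \<Inter>(G - {A}) \<subseteq> X \<inter> \<Inter>G" by auto
  then show "X \<inter> \<Inter>G \<noteq> {}" using ne by auto
qed

lemma ultra_exists:
  assumes "fip X A"
  obtains U where "A \<subseteq> U" "fip X U" "X \<in> U"
    "\<And>B C. B \<union> C \<in> U \<Longrightarrow> B \<in> U \<or> C \<in> U"
    "\<And>B C. B \<in> U \<Longrightarrow> C \<in> U \<Longrightarrow> B \<inter> C \<in> U"
    "\<And>B C. B \<in> U \<Longrightarrow> B \<subseteq> C \<Longrightarrow> C \<in> U"
proof -
  let ?F = "{U. A \<subseteq> U \<and> fip X U}"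
  have "\<exists>M\<in>?F. \<forall>Y\<in>?F. M \<subseteq> Y \<longrightarrow> Y = M"
  proof (rule subset_Zorn_nonempty)
    have "A \<in> ?F" using assms by simp
    then show "?F \<noteq> {}" by blast
  next
    fix C assume C: "C \<noteq> {}" "subset.chain ?F C"
    have CF: "C \<subseteq> ?F" using C(2) by (simp add: subset.chain_def)
    obtain B0 where "B0 \<in> C" using C(1) by auto
    then have "A \<subseteq> B0" using CF by auto
    then have "A \<subseteq> \<Union>C" using \<open>B0 \<in> C\<close> by auto
    moreover have "fip X (\<Union>C)" unfolding fip_def
    proof (intro allI impI)
      fix G assume G: "finite G \<and> G \<subseteq> \<Union>C"
      obtain B where B: "B \<in> C" "G \<subseteq> B" using finite_subset_Union_chain[OF conjunct1[OF G] conjunct2[OF G] C(1,2)] by metis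
      then have "fip X B" using CF by auto
      then show "X \<inter> \<Inter>G \<noteq> {}" using G B(2) unfolding fip_def by simp
    qed
    ultimately show "\<Union>C \<in> ?F" by simp
  qed
  then obtain U where U1: "U \<in> ?F" and Umax: "\<forall>Y\<in>?F. U \<subseteq> Y \<longrightarrow> Y = U" by (rule bexE)
  have U: "A \<subseteq> U" "fip X U" using U1 by auto
  have max: "Y = U" if "A \<subseteq> Y" "fip X Y" "U \<subseteq> Y" for Y using Umax that by simp
  have good: "B \<in> U" if "\<forall>G. finite G \<and> G \<subseteq> U \<longrightarrow> X \<inter> B \<inter> \<Inter>G \<noteq> {}" for B
  proof -
    have "insert B U = U" by (rule max) (use fip_insert[OF U(2) that] U(1) in auto)
    then show ?thesis by auto
  qed
  have fipU: "X \<inter> \<Inter>G \<noteq> {}" if "finite G" "G \<subseteq> U" for G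
    using U(2) that unfolding fip_def by simp
  show thesis
  proof (rule that[OF U])
    show "X \<in> U"
    proof (rule good, intro allI impI)
      fix G assume "finite G \<and> G \<subseteq> U"
      then show "X \<inter> X \<inter> \<Inter>G \<noteq> {}" using fipU by simp
    qed
  next
    fix B C assume BC: "B \<in> U" "B \<subseteq> C"
    show "C \<in> U"
    proof (rule good, intro allI impI)
      fix G assume G: "finite G \<and> G \<subseteq> U"
      have "finite (insert B G)" "insert B G \<subseteq> U" using G BC by auto
      then have "X \<inter> \<Inter>(insert B G) \<noteq> {}" by (rule fipU)
      moreover have "X \<inter> \<Inter>(insert B G) \<subseteq> X \<inter> C \<inter> \<Inter>G" using BC by auto
      ultimately show "X \<inter> C \<inter> \<Inter>G \<noteq> {}" by auto
    qed
  next
    fix B C assume BC: "B \<in> U" "C \<in> U"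
    show "B \<inter> C \<in> U"
    proof (rule good, intro allI impI)
      fix G assume G: "finite G \<and> G \<subseteq> U"
      have "finite (insert B (insert C G))" "insert B (insert C G) \<subseteq> U" using G BC by auto
      then have "X \<inter> \<Inter>(insert B (insert C G)) \<noteq> {}" by (rule fipU)
      moreover have "\<Inter>(insert B (insert C G)) = B \<inter> C \<inter> \<Inter>G" by auto
      ultimately show "X \<inter> (B \<inter> C) \<inter> \<Inter>G \<noteq> {}" by (simp add: Int_assoc)
    qed
  next
    fix B C assume BC: "B \<union> C \<in> U"
    show "B \<in> U \<or> C \<in> U"
    proof (rule ccontr)
      assume nn: "\<not> (B \<in> U \<or> C \<in> U)"
      have "\<not> (\<forall>G. finite G \<and> G \<subseteq> U \<longrightarrow> X \<inter> B \<inter> \<Inter>G \<noteq> {})" using good nn by metis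
      then obtain G1 where G1: "finite G1" "G1 \<subseteq> U" "X \<inter> B \<inter> \<Inter>G1 = {}" by auto
      have "\<not> (\<forall>G. finite G \<and> G \<subseteq> U \<longrightarrow> X \<inter> C \<inter> \<Inter>G \<noteq> {})" using good nn by metis
      then obtain G2 where G2: "finite G2" "G2 \<subseteq> U" "X \<inter> C \<inter> \<Inter>G2 = {}" by auto
      have "finite (insert (B \<union> C) (G1 \<union> G2))" "insert (B \<union> C) (G1 \<union> G2) \<subseteq> U" using G1 G2 BC by auto
      then have "X \<inter> \<Inter>(insert (B \<union> C) (G1 \<union> G2)) \<noteq> {}" by (rule fipU)
      moreover have "X \<inter> \<Inter>(insert (B \<union> C) (G1 \<union> G2)) \<subseteq> (X \<inter> B \<inter> \<Inter>G1) \<union> (X \<inter> C \<inter> \<Inter>G2)"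
        by auto
      ultimately show False using G1(3) G2(3) by auto
    qed
  qed
qed



lemma sub_facts: "subring D \<Longrightarrow> 0 \<in> D \<and> 1 \<in> D \<and> (\<forall>x\<in>D. \<forall>y\<in>D. x + y \<in> D \<and> x - y \<in> D \<and> x * y \<in> D)"
  by (simp add: subring_def)

lemma center_loc:
  assumes sD: "subring D" and P: "prime_ideal_of D P"
  shows "center D (localization D P) = P"
proof -
  have PD: "P \<subseteq> D" and P0: "0 \<in> P" and Pm: "\<And>d x. d \<in> D \<Longrightarrow> x \<in> P \<Longrightarrow> d * x \<in> P"
    using P unfolding prime_ideal_of_def ideal_of_def by auto
  have one: "1 \<notin> P" using prime_one[OF P sD] .
  have DL: "D \<subseteq> localization D P"
  proof
    fix x assume "x \<in> D"
    then have "x = x / 1 \<and> x \<in> D \<and> 1 \<in> D \<and> (1::'a) \<notin> P" using sD one by (simp add: subring_def)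
    then show "x \<in> localization D P" unfolding localization_def by blast
  qed
  show ?thesis
  proof (rule set_eqI)
    fix x show "x \<in> center D (localization D P) \<longleftrightarrow> x \<in> P"
    proof
      assume "x \<in> center D (localization D P)"
      then have x: "x \<in> D" "x = 0 \<or> inverse x \<notin> localization D P"
        unfolding center_def max_ideal_def by auto
      show "x \<in> P"
      proof (rule ccontr)
        assume "x \<notin> P"
        then have "x \<noteq> 0" using P0 by auto
        moreover have "inverse x = 1 / x" by (simp add: divide_inverse)
        moreover have "1 \<in> D" using sD by (simp add: subring_def)
        ultimately have "inverse x = 1 / x \<and> 1 \<in> D \<and> x \<in> D \<and> x \<notin> P" using x(1) \<open>x \<notin> P\<close> by blast
        then have "inverse x \<in> localization D P"
          unfolding localization_def by blast
        then show False using x \<open>x \<noteq> 0\<close> by blast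
      qed
    next
      assume xP: "x \<in> P"
      then have xD: "x \<in> D" using PD by auto
      have "inverse x \<notin> localization D P" if "x \<noteq> 0"
      proof
        assume "inverse x \<in> localization D P"
        then obtain a s where as: "inverse x = a / s" "a \<in> D" "s \<in> D" "s \<notin> P"
          unfolding localization_def by blast
        then have "s \<noteq> 0" using P0 by auto
        have "a / s * x = inverse x * x" using as(1) by simp
        also have "\<dots> = 1" using that by simp
        finally have e: "a / s * x = 1" .
        have "(a / s * x) * s = a * x" using \<open>s \<noteq> 0\<close> by simp
        then have "s = a * x" using e by simp
        then have "s \<in> P" using Pm[OF as(2) xP] by simp
        then show False using as by simp
      qed
      then show "x \<in> center D (localization D P)"
        unfolding center_def max_ideal_def using xD DL by auto
    qed
  qed
qed

lemma X_char:
  assumes sD: "subring D" and rep: "essential_representation D \<V>"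
  shows "{center D V | V. V \<in> \<V>} = {P \<in> Spec D. localization D P \<in> \<V>}"
proof -
  have r: "\<And>V. V \<in> \<V> \<Longrightarrow> \<exists>P\<in>Spec D. V = localization D P"
    using rep unfolding essential_representation_def essential_valuation_overring_def by blast
  show ?thesis
  proof (rule set_eqI, rule iffI)
    fix Q assume "Q \<in> {center D V | V. V \<in> \<V>}"
    then obtain V where V: "V \<in> \<V>" "Q = center D V" by blast
    then obtain P where P: "P \<in> Spec D" "V = localization D P" using r by blast
    then have "Q = P" using center_loc[OF sD] V unfolding Spec_def by auto
    then show "Q \<in> {P \<in> Spec D. localization D P \<in> \<V>}" using P V by auto
  next
    fix Q assume "Q \<in> {P \<in> Spec D. localization D P \<in> \<V>}"
    then have "Q \<in> Spec D" "localization D Q \<in> \<V>" by auto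
    then have "Q = center D (localization D Q)" using center_loc[OF sD] unfolding Spec_def by auto
    then show "Q \<in> {center D V | V. V \<in> \<V>}" using \<open>localization D Q \<in> \<V>\<close> by blast
  qed
qed

lemma val_min:
  assumes V: "valuation_domain V" and S: "finite S" "S \<noteq> {}" "0 \<notin> S"
  shows "\<exists>x\<in>S. \<forall>f\<in>S. f / x \<in> V"
  using S
proof (induction S rule: finite_ne_induct)
  case (singleton a)
  then show ?case using V by (simp add: valuation_domain_def subring_def)
next
  case (insert a F)
  then obtain x where x: "x \<in> F" "\<forall>f\<in>F. f / x \<in> V" by auto
  have a0: "a \<noteq> 0" "x \<noteq> 0" using insert x by auto
  have sV: "subring V" using V by (simp add: valuation_domain_def)
  show ?case
  proof (cases "a / x \<in> V")
    case True then show ?thesis using x by auto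
  next
    case False
    have "a / x \<noteq> 0" using a0 by simp
    then have "inverse (a / x) \<in> V" using V False unfolding valuation_domain_def by blast
    then have xa: "x / a \<in> V" by simp
    have "\<forall>f\<in>insert a F. f / a \<in> V"
    proof
      fix f assume "f \<in> insert a F"
      then show "f / a \<in> V"
      proof
        assume "f = a" then show ?thesis using a0 sV by (simp add: subring_def)
      next
        assume "f \<in> F"
        then have "f / x \<in> V" using x by blast
        then have "(f / x) * (x / a) \<in> V" using xa sV unfolding subring_def by blast
        moreover have "(f / x) * (x / a) = f / a" using a0 by simp
        ultimately show ?thesis by (simp only:)
      qed
    qed
    then show ?thesis by auto
  qed
qed

lemma t_ideal_val:
  assumes sD: "subring D" and P: "prime_ideal_of D P" and V: "valuation_domain (localization D P)"
  shows "t_ideal D P"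
proof (cases "P = {0}")
  case True then show ?thesis by (simp add: t_ideal_def)
next
  case False
  have PD: "P \<subseteq> D" and P0: "0 \<in> P" and Pm: "\<And>d x. d \<in> D \<Longrightarrow> x \<in> P \<Longrightarrow> d * x \<in> P"
    and Pi: "ideal_of D P"
    using P unfolding prime_ideal_of_def ideal_of_def by auto
  have Pp: "\<And>a b. a \<in> D \<Longrightarrow> b \<in> D \<Longrightarrow> a * b \<in> P \<Longrightarrow> a \<in> P \<or> b \<in> P"
    using P unfolding prime_ideal_of_def by auto
  have one: "1 \<notin> P" using prime_one[OF P sD] .
  have "P = tclos D P"
  proof
    show "P \<subseteq> tclos D P"
    proof
      fix p assume p: "p \<in> P"
      have "fg_ideal D {p} \<subseteq> P" using fg_sub[OF Pi] p by auto
      moreover have "p \<in> vclos D (fg_ideal D {p})" using sub_vclos in_fg[OF sD] by blast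
      ultimately show "p \<in> tclos D P" unfolding tclos_def by blast
    qed
  next
    show "tclos D P \<subseteq> P"
    proof
      fix y assume "y \<in> tclos D P"
      then obtain F where F: "finite F" "fg_ideal D F \<subseteq> P" "y \<in> vclos D (fg_ideal D F)"
        unfolding tclos_def by blast
      have FP: "F \<subseteq> P" using F in_fg[OF sD F(1)] by blast
      have yz: "\<And>z. z \<in> colon D (fg_ideal D F) \<Longrightarrow> y * z \<in> D"
        using F(3) unfolding vclos_def colon_def by (auto simp: mult.commute)
      show "y \<in> P"
      proof (cases "F - {0} = {}")
        case True
        obtain p where p: "p \<in> P" "p \<noteq> 0" using False P0 by blast
        show ?thesis
        proof (rule ccontr)
          assume "y \<notin> P"
          then have y0: "y \<noteq> 0" using P0 by auto
          have "inverse p / y \<in> colon D (fg_ideal D F)"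
            by (rule colon_fg[OF sD F(1)]) (use True sD in \<open>auto simp: subring_def\<close>)
          then have "y * (inverse p / y) \<in> D" by (rule yz)
          then have "inverse p \<in> D" using y0 by simp
          then have "inverse p * p \<in> P" using Pm p by blast
          then show False using p one by simp
        qed
      next
        case False2: False
        obtain x where x: "x \<in> F - {0}" "\<forall>f\<in>F - {0}. f / x \<in> localization D P"
          using val_min[OF V _ False2] F(1) by auto
        have x0: "x \<noteq> 0" "x \<in> P" using x FP by auto
        have "\<forall>f\<in>F. f / x \<in> localization D P"
        proof
          fix f assume "f \<in> F"
          show "f / x \<in> localization D P"
          proof (cases "f = 0")
            case True
            have "(0::'a) = 0 / 1 \<and> 0 \<in> D \<and> 1 \<in> D \<and> (1::'a) \<notin> P" using sD one by (simp add: subring_def)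
            then show ?thesis using True unfolding localization_def by auto
          qed (use x \<open>f \<in> F\<close> in auto)
        qed
        then have "\<forall>f\<in>F. \<exists>p. f / x = fst p / snd p \<and> fst p \<in> D \<and> snd p \<in> D \<and> snd p \<notin> P"
          unfolding localization_def by force
        from bchoice[OF this] obtain g where
          g: "\<forall>f\<in>F. f / x = fst (g f) / snd (g f) \<and> fst (g f) \<in> D \<and> snd (g f) \<in> D \<and> snd (g f) \<notin> P"
          by blast
        define a where "a = (\<lambda>f. fst (g f))"
        define s where "s = (\<lambda>f. snd (g f))"
        have as: "\<And>f. f \<in> F \<Longrightarrow> f / x = a f / s f \<and> a f \<in> D \<and> s f \<in> D \<and> s f \<notin> P"
          using g unfolding a_def s_def by blast
        define \<sigma> where "\<sigma> = prod s F"
        have \<sigma>: "\<sigma> \<in> D" "\<sigma> \<notin> P" using prime_prod[OF P sD F(1)] as unfolding \<sigma>_def by auto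
        have zc: "\<sigma> / x \<in> colon D (fg_ideal D F)"
        proof (rule colon_fg[OF sD F(1)], rule ballI)
          fix f assume f: "f \<in> F"
          have s0: "s f \<noteq> 0" using as[OF f] P0 by auto
          have "\<sigma> = s f * prod s (F - {f})" unfolding \<sigma>_def using F(1) f by (simp add: prod.remove)
          note sig = this
          have "\<sigma> / x * f = \<sigma> * (f / x)" by simp
          also have "\<dots> = \<sigma> * (a f / s f)" using as[OF f] by simp
          also have "\<dots> = prod s (F - {f}) * a f" unfolding sig using s0 by simp
          finally have "\<sigma> / x * f = prod s (F - {f}) * a f" .
          moreover have "prod s (F - {f}) \<in> D" by (rule subring_prod[OF sD]) (use F(1) as in auto)
          ultimately show "\<sigma> / x * f \<in> D" using as[OF f] sD by (simp add: subring_def)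
        qed
        have c1: "1 \<in> colon D (fg_ideal D F)"
          by (rule colon_fg[OF sD F(1)]) (use FP PD in auto)
        have yD: "y \<in> D" using yz[OF c1] by simp
        have "y * (\<sigma> / x) \<in> D" using yz[OF zc] .
        then have "y * (\<sigma> / x) * x \<in> P" using Pm x0 by blast
        then have "y * \<sigma> \<in> P" using x0 by simp
        then show "y \<in> P" using Pp[OF yD \<sigma>(1)] \<sigma> by blast
      qed
    qed
  qed
  then show ?thesis by (simp add: t_ideal_def)
qed



theorem corollary2p5:
  fixes D :: "'a::field set" and \<V> :: "'a set set"
  assumes "domain_with_qf D"
    and "essential_domain D"
    and "essential_representation D \<V>"
    and "closedin (constructible_topology D) {center D V | V. V \<in> \<V>}"
  shows "PvMD D"
proof -
  have sD: "subring D" and qf: "\<forall>x. \<exists>a\<in>D. \<exists>b\<in>D. b \<noteq> 0 \<and> x = a / b"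
    using assms(1) unfolding domain_with_qf_def by auto
  have D01: "0 \<in> D" "1 \<in> D" using sD by (auto simp: subring_def)
  have repV: "\<And>V. V \<in> \<V> \<Longrightarrow> valuation_domain V \<and> (\<exists>P\<in>Spec D. V = localization D P)"
    and int: "\<Inter>\<V> = D"
    using assms(3) unfolding essential_representation_def essential_valuation_overring_def by auto
  define X where "X = {center D V | V. V \<in> \<V>}"
  have Xc: "X = {P \<in> Spec D. localization D P \<in> \<V>}" using X_char[OF sD assms(3)] X_def by simp
  have Xcl: "closedin (constructible_topology D) X" using assms(4) X_def by simp
  have XS: "X \<subseteq> Spec D" using Xc by auto
  have XP: "\<And>P. P \<in> X \<Longrightarrow> prime_ideal_of D P" using XS unfolding Spec_def by auto
  show ?thesis unfolding PvMD_def
  proof (intro allI impI)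
    fix M assume tm: "t_maximal D M"
    then have Mi: "ideal_of D M" "M \<noteq> D" "t_ideal D M"
      and Mmax: "\<And>J. ideal_of D J \<Longrightarrow> J \<noteq> D \<Longrightarrow> t_ideal D J \<Longrightarrow> M \<subseteq> J \<Longrightarrow> J = M"
      unfolding t_maximal_def by auto
    have MD: "M \<subseteq> D" using Mi(1) unfolding ideal_of_def by auto
    show "valuation_domain (localization D M)"
    proof (cases "M = {0}")
      case True
      have "x \<in> localization D M" for x
      proof -
        obtain a b where ab: "a \<in> D" "b \<in> D" "b \<noteq> 0" "x = a / b" using qf by meson
        then have "x = a / b \<and> a \<in> D \<and> b \<in> D \<and> b \<notin> M" using True by simp
        then show ?thesis unfolding localization_def by blast
      qed
      then have "localization D M = UNIV" by auto
      then show ?thesis by (simp add: valuation_domain_def subring_def)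
    next
      case False
      then have Mt: "M = tclos D M" using Mi(3) unfolding t_ideal_def by simp
      have ex: "\<exists>P\<in>X. M \<subseteq> P"
      proof (rule ccontr)
        assume H: "\<not> (\<exists>P\<in>X. M \<subseteq> P)"
        have fin: "\<exists>F. finite F \<and> F \<subseteq> M \<and> (\<forall>P\<in>X. \<not> F \<subseteq> P)"
        proof (rule ccontr)
          assume H2: "\<not> (\<exists>F. finite F \<and> F \<subseteq> M \<and> (\<forall>P\<in>X. \<not> F \<subseteq> P))"
          have H2': "\<exists>P\<in>X. F \<subseteq> P" if "finite F" "F \<subseteq> M" for F
            using H2 that by auto
          define \<A> where "\<A> = (\<lambda>F. {P. F \<subseteq> P}) ` {F. finite F \<and> F \<subseteq> M}"
          have "fip X \<A>" unfolding fip_def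
          proof (intro allI impI)
            fix G assume G: "finite G \<and> G \<subseteq> \<A>"
            then have "G \<subseteq> (\<lambda>F. {P. F \<subseteq> P}) ` {F. finite F \<and> F \<subseteq> M}" "finite G" unfolding \<A>_def by auto
            then obtain C where C: "C \<subseteq> {F. finite F \<and> F \<subseteq> M}" "finite C" "G = (\<lambda>F. {P. F \<subseteq> P}) ` C"
              using finite_subset_image[of G] by meson
            have "finite (\<Union>C)" "\<Union>C \<subseteq> M" using C(1,2) by auto
            then obtain P where P: "P \<in> X" "\<Union>C \<subseteq> P" using H2' by meson
            have "P \<in> X \<inter> \<Inter>G" using P C(3) by auto
            then show "X \<inter> \<Inter>G \<noteq> {}" by auto
          qed
          then obtain U where U: "\<A> \<subseteq> U" "fip X U" "X \<in> U"
            and Usplit: "\<And>B C. B \<union> C \<in> U \<Longrightarrow> B \<in> U \<or> C \<in> U"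
            and Uint: "\<And>B C. B \<in> U \<Longrightarrow> C \<in> U \<Longrightarrow> B \<inter> C \<in> U"
            and Usup: "\<And>B C. B \<in> U \<Longrightarrow> B \<subseteq> C \<Longrightarrow> C \<in> U"
            by (rule ultra_exists) (rule that; assumption)
          have Une: "X \<inter> B \<noteq> {}" if "B \<in> U" for B
          proof -
            have "finite {B}" "{B} \<subseteq> U" using that by auto
            then have "X \<inter> \<Inter>{B} \<noteq> {}" using U(2) unfolding fip_def by (metis (no_types))
            then show ?thesis by simp
          qed
          define Q where "Q = {x \<in> D. {P. x \<in> P} \<in> U}"
          have XU: "\<And>B. X \<subseteq> B \<Longrightarrow> B \<in> U" using Usup U(3) by blast
          have XIU: "\<And>B C. B \<in> U \<Longrightarrow> X \<inter> B \<subseteq> C \<Longrightarrow> C \<in> U" using Usup Uint U(3) by blast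
          have Qi: "ideal_of D Q" unfolding ideal_of_def
          proof (intro conjI ballI)
            show "Q \<subseteq> D" unfolding Q_def by auto
            have "X \<subseteq> {P. 0 \<in> P}" using XP unfolding prime_ideal_of_def ideal_of_def by auto
            then show "0 \<in> Q" unfolding Q_def using XU D01 by auto
          next
            fix x y assume xy: "x \<in> Q" "y \<in> Q"
            have "{P. x \<in> P} \<inter> {P. y \<in> P} \<in> U" using xy Uint unfolding Q_def by auto
            moreover have "X \<inter> ({P. x \<in> P} \<inter> {P. y \<in> P}) \<subseteq> {P. x + y \<in> P}"
              using XP unfolding prime_ideal_of_def ideal_of_def by auto
            ultimately have "{P. x + y \<in> P} \<in> U" by (rule XIU)
            moreover have "x + y \<in> D" using xy sD unfolding Q_def subring_def by auto
            ultimately show "x + y \<in> Q" unfolding Q_def by auto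
          next
            fix d x assume dx: "d \<in> D" "x \<in> Q"
            have "{P. x \<in> P} \<in> U" using dx unfolding Q_def by auto
            moreover have "X \<inter> {P. x \<in> P} \<subseteq> {P. d * x \<in> P}"
              using XP dx(1) unfolding prime_ideal_of_def ideal_of_def by auto
            ultimately have "{P. d * x \<in> P} \<in> U" by (rule XIU)
            moreover have "d * x \<in> D" using dx sD unfolding Q_def subring_def by auto
            ultimately show "d * x \<in> Q" unfolding Q_def by auto
          qed
          have Qp: "prime_ideal_of D Q" unfolding prime_ideal_of_def
          proof (intro conjI ballI impI)
            show "ideal_of D Q" by (rule Qi)
            show "Q \<noteq> D"
            proof
              assume "Q = D"
              then have "{P. 1 \<in> P} \<in> U" using D01 unfolding Q_def by auto
              then have "X \<inter> {P. 1 \<in> P} \<noteq> {}" by (rule Une)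
              then obtain P where "P \<in> X" "1 \<in> P" by auto
              then show False using prime_one[OF XP sD] by blast
            qed
          next
            fix a b assume ab: "a \<in> D" "b \<in> D" "a * b \<in> Q"
            have "{P. a * b \<in> P} \<in> U" using ab unfolding Q_def by auto
            moreover have "X \<inter> {P. a * b \<in> P} \<subseteq> {P. a \<in> P} \<union> {P. b \<in> P}"
              using XP ab(1,2) unfolding prime_ideal_of_def by auto
            ultimately have "{P. a \<in> P} \<union> {P. b \<in> P} \<in> U" by (rule XIU)
            then have "{P. a \<in> P} \<in> U \<or> {P. b \<in> P} \<in> U" by (rule Usplit)
            then show "a \<in> Q \<or> b \<in> Q" using ab unfolding Q_def by auto
          qed
          have QS: "Q \<in> Spec D" using Qp unfolding Spec_def by simp
          have MQ: "M \<subseteq> Q"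
          proof
            fix m assume m: "m \<in> M"
            have "{P. {m} \<subseteq> P} \<in> \<A>" unfolding \<A>_def using m by auto
            then have "{P. {m} \<subseteq> P} \<in> U" using U(1) by auto
            moreover have "{P. {m} \<subseteq> P} = {P. m \<in> P}" by auto
            ultimately show "m \<in> Q" unfolding Q_def using m MD by auto
          qed
          define S where "S = ({basic_open D f | f. f \<in> D} \<union> {Spec D - basic_open D f | f. f \<in> D})"
          have T: "constructible_topology D = topology_generated_by S"
            unfolding constructible_topology_def S_def by simp
          have QX: "Q \<in> X"
          proof (rule ccontr)
            assume QnX: "Q \<notin> X"
            have key: "W \<in> U" if "generate_topology_on S W" "Q \<in> W" for W
              using that
            proof (induction rule: generate_topology_on.induct)
              case Empty then show ?case by simp
            next
              case (Int a b) then show ?case using Uint by auto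
            next
              case (UN K)
              then obtain k where "k \<in> K" "Q \<in> k" by auto
              then have "k \<in> U" using UN by auto
              then show ?case using Usup \<open>k \<in> K\<close> by blast
            next
              case (Basis s)
              then consider (o) f where "f \<in> D" "s = basic_open D f"
                | (c) f where "f \<in> D" "s = Spec D - basic_open D f"
                unfolding S_def by auto
              then show ?case
              proof cases
                case o
                then have "f \<notin> Q" using Basis unfolding basic_open_def by auto
                then have nf: "{P. f \<in> P} \<notin> U" using o unfolding Q_def by auto
                have "X \<subseteq> {P. f \<in> P} \<union> basic_open D f" using XS unfolding basic_open_def by auto
                then have "{P. f \<in> P} \<union> basic_open D f \<in> U" by (rule XU)
                then show ?thesis using Usplit nf o by blast
              next
                case c
                then have "f \<in> Q" using Basis QS unfolding basic_open_def by auto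
                then have "{P. f \<in> P} \<in> U" unfolding Q_def by auto
                moreover have "X \<inter> {P. f \<in> P} \<subseteq> Spec D - basic_open D f" using XS unfolding basic_open_def by auto
                ultimately show ?thesis using c XIU by simp
              qed
            qed
            have "openin (constructible_topology D) (topspace (constructible_topology D) - X)"
              using Xcl unfolding closedin_def by simp
            then have g: "generate_topology_on S (topspace (topology_generated_by S) - X)"
              unfolding T by (simp add: openin_topology_generated_by_iff)
            have "basic_open D 1 \<in> S" unfolding S_def using D01 by auto
            moreover have "Q \<in> basic_open D 1" using QS prime_one[OF Qp sD] unfolding basic_open_def by auto
            ultimately have "Q \<in> topspace (topology_generated_by S)" by auto
            then have "Q \<in> topspace (topology_generated_by S) - X" using QnX by simp
            then have "topspace (topology_generated_by S) - X \<in> U" using key g by blast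
            then have "X \<inter> (topspace (topology_generated_by S) - X) \<noteq> {}" by (rule Une)
            then show False by auto
          qed
          show False using H MQ QX by blast
        qed
        then obtain F where F: "finite F" "F \<subseteq> M" "\<forall>P\<in>X. \<not> F \<subseteq> P" by blast
        have FD: "F \<subseteq> D" using F(2) MD by auto
        have "1 \<in> vclos D (fg_ideal D F)" unfolding vclos_def
        proof (unfold colon_def, intro CollectI ballI)
          fix z assume z: "z \<in> {x. \<forall>y\<in>fg_ideal D F. x * y \<in> D}"
          have zf: "z * f \<in> D" if "f \<in> F" for f using z in_fg[OF sD F(1) that] by blast
          have "z \<in> \<Inter>\<V>"
          proof
            fix V assume V: "V \<in> \<V>"
            then obtain P where P: "P \<in> Spec D" "V = localization D P" using repV by blast
            then have PX: "P \<in> X" using Xc V by auto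
            then obtain f where f: "f \<in> F" "f \<notin> P" using F(3) by auto
            have "0 \<in> P" using P(1) unfolding Spec_def prime_ideal_of_def ideal_of_def by auto
            then have f0: "f \<noteq> 0" using f by auto
            have "z = (z * f) / f \<and> z * f \<in> D \<and> f \<in> D \<and> f \<notin> P" using f0 zf[OF f(1)] FD f by auto
            then show "z \<in> V" unfolding P(2) localization_def by blast
          qed
          then show "1 * z \<in> D" using int by simp
        qed
        moreover have "fg_ideal D F \<subseteq> M" by (rule fg_sub[OF Mi(1) F(1,2)])
        ultimately have "1 \<in> tclos D M" unfolding tclos_def using F(1) by blast
        then have one: "1 \<in> M" using Mt by simp
        have "D \<subseteq> M"
        proof
          fix d assume "d \<in> D"
          then have "d * 1 \<in> M" using Mi(1) one unfolding ideal_of_def by blast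
          then show "d \<in> M" by simp
        qed
        then show False using MD Mi(2) by auto
      qed
      then obtain P where P: "P \<in> X" "M \<subseteq> P" by blast
      have PS: "prime_ideal_of D P" "localization D P \<in> \<V>" using P Xc unfolding Spec_def by auto
      have Pv: "valuation_domain (localization D P)" using repV PS(2) by blast
      have "t_ideal D P" by (rule t_ideal_val[OF sD PS(1) Pv])
      moreover have "ideal_of D P" "P \<noteq> D" using PS(1) unfolding prime_ideal_of_def by auto
      ultimately have "P = M" using Mmax P(2) by blast
      then show ?thesis using Pv by simp
    qed
  qed
qed


end
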